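(* Let $J>0$, $h\ne0$, $\rho>0$, and $\varepsilon\in\mathcal{E}_{h,\rho}$. Define $m=-\frac hJ+\mathrm{sgn}(h)\sqrt{\frac{h^2}{J^2}-\frac{2\varepsilon}J}$ and $\mu=-\frac m{\rho-m^2}$. Let $I\subset\Lambda$ be an index set of fixed size and $f:\mathbb{R}^{|I|}\to\mathbb{R}$ a bounded $1$-Lipschitz function with respect to $\|\cdot\|_2$. Then \[ \langle f\circ P_I\rangle_{\mathrm{MC}}^{\varepsilon,\rho;N}=\langle f\circ P_I\rangle_{\mathrm{C}}^{\mu,\rho;N}+O(N^{-1/2}). \]
   Context: Mean-field spherical model: $\Lambda$ finite lattice, $N=|\Lambda|$, $\phi\in\mathbb{R}^N$, $H[\phi]=-\frac J{2N}(\sum_x\phi_x)^2-h\sum_x\phi_x$; $P_I$ restricts to sites in $I$. For $|m|<\sqrt\rho$, $\mu_{\mathrm{MC}}^{m,\rho;N}$ is the normalized uniform surface measure on $\{\sum\phi_x=mN,\ \sum\phi_x^2=\rho N\}$ and $Z_{\mathrm{MC}}(m,\rho;N)=(\rho-m^2)^{(N-3)/2}$. For $\varepsilon\le\frac{h^2}{2J}$, $m_\pm=-\frac hJ\pm\sqrt{\frac{h^2}{J^2}-\frac{2\varepsilon}J}$. Fixed energy ensemble: if $\varepsilon<\frac{h^2}{2J}$ and $m_\pm^2<\rho$, $\langle f\rangle_{\mathrm{MC}}^{\varepsilon,\rho;N}=\sum_\pm\frac{Z_{\mathrm{MC}}(m_\pm,\rho;N)}{Z_{\mathrm{MC}}(m_+,\rho;N)+Z_{\mathrm{MC}}(m_-,\rho;N)}\langle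 f\rangle_{\mathrm{MC}}^{m_\pm,\rho;N}$; if $\varepsilon<\frac{h^2}{2J}$ and $\min(m_\pm^2)<\rho\le\max(m_\pm^2)$, it is $\langle f\rangle_{\mathrm{MC}}^{m',\rho;N}$ with $m'$ the one of $m_\pm$ of smaller absolute value; if $\varepsilon=\frac{h^2}{2J}$ and $\rho>h^2/J^2$, it is $\langle f\rangle_{\mathrm{MC}}^{-h/J,\rho;N}$. $\mathcal{E}_{h,\rho}=\{\varepsilon\le\frac{h^2}{2J}:|\frac{|h|}J-\sqrt{\frac{h^2}{J^2}-\frac{2\varepsilon}J}|<\sqrt\rho\}$. Auxiliary canonical ensemble: $\langle f\rangle_{\mathrm{C}}^{\mu,\rho;N}=\frac{\int_{-\sqrt\rho}^{\sqrt\rho}dm'\,e^{-\mu Nm'}(\rho-m'^2)^{(N-3)/2}\langle f\rangle_{\mathrm{MC}}^{m',\rho;N}}{\int_{-\sqrt\rho}^{\sqrt\rho}dm'\,e^{-\mu Nm'}(\rho-m'^2)^{(N-3)/2}}$. *)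

theory Defs
  imports "HOL-Probability.Probability" "HOL-Library.Landau_Symbols"
begin

text \<open>Lattice: Lambda = {0..<N}; configurations phi :: nat => real (only coordinates < N matter).\<close>

definition std_gauss :: "real measure" where
  "std_gauss = density lborel std_normal_density"

text \<open>Configuration on the sphere {sum phi = m N, sum phi^2 = rho N} obtained from a
 Gaussian vector g by projecting onto the hyperplane orthogonal to (1,...,1),
 normalizing and translating. Its law (g standard Gaussian on R^N) is the
 normalized uniform surface measure on that (N-2)-sphere.\<close>
definition mc_config :: "nat \<Rightarrow> real \<Rightarrow> real \<Rightarrow> (nat \<Rightarrow> real) \<Rightarrow> (nat \<Rightarrow> real)" where
  "mc_config N m \<rho> g =
     (let gbar = (\<Sum>y<N. g y) / real N;
          r = sqrt (\<Sum>y<N. (g y - gbar)\<^sup>2)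
      in (\<lambda>x. if x < N then m + sqrt (real N * (\<rho> - m\<^sup>2)) * (g x - gbar) / r else 0))"

definition mc_expect :: "nat \<Rightarrow> real \<Rightarrow> real \<Rightarrow> ((nat \<Rightarrow> real) \<Rightarrow> real) \<Rightarrow> real" where
  "mc_expect N m \<rho> F =
     integral\<^sup>L (PiM {..<N} (\<lambda>_. std_gauss)) (\<lambda>g. F (mc_config N m \<rho> g))"

definition Z_MC :: "nat \<Rightarrow> real \<Rightarrow> real \<Rightarrow> real" where
  "Z_MC N m \<rho> = (\<rho> - m\<^sup>2) powr ((real N - 3) / 2)"

definition m_plus :: "real \<Rightarrow> real \<Rightarrow> real \<Rightarrow> real" where
  "m_plus J h \<epsilon> = - h / J + sqrt (h\<^sup>2 / J\<^sup>2 - 2 * \<epsilon> / J)"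

definition m_minus :: "real \<Rightarrow> real \<Rightarrow> real \<Rightarrow> real" where
  "m_minus J h \<epsilon> = - h / J - sqrt (h\<^sup>2 / J\<^sup>2 - 2 * \<epsilon> / J)"

text \<open>Fixed energy ensemble < F >_MC^{eps,rho;N} (undefined outside the three cases).\<close>
definition fe_expect :: "real \<Rightarrow> real \<Rightarrow> nat \<Rightarrow> real \<Rightarrow> real \<Rightarrow> ((nat \<Rightarrow> real) \<Rightarrow> real) \<Rightarrow> real" where
  "fe_expect J h N \<epsilon> \<rho> F =
    (let mp = m_plus J h \<epsilon>; mm = m_minus J h \<epsilon> in
     if \<epsilon> < h\<^sup>2 / (2 * J) \<and> mp\<^sup>2 < \<rho> \<and> mm\<^sup>2 < \<rho> then
       (Z_MC N mp \<rho> * mc_expect N mp \<rho> F + Z_MC N mm \<rho> * mc_expect N mm \<rho> F)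
         / (Z_MC N mp \<rho> + Z_MC N mm \<rho>)
     else if \<epsilon> < h\<^sup>2 / (2 * J) \<and> min (mp\<^sup>2) (mm\<^sup>2) < \<rho> \<and> \<rho> \<le> max (mp\<^sup>2) (mm\<^sup>2) then
       mc_expect N (if \<bar>mp\<bar> < \<bar>mm\<bar> then mp else mm) \<rho> F
     else if \<epsilon> = h\<^sup>2 / (2 * J) \<and> \<rho> > h\<^sup>2 / J\<^sup>2 then
       mc_expect N (- h / J) \<rho> F
     else undefined)"

definition energy_set :: "real \<Rightarrow> real \<Rightarrow> real \<Rightarrow> real set" where
  "energy_set J h \<rho> = {\<epsilon>. \<epsilon> \<le> h\<^sup>2 / (2 * J) \<and>
      \<bar>\<bar>h\<bar> / J - sqrt (h\<^sup>2 / J\<^sup>2 - 2 * \<epsilon> / J)\<bar> < sqrt \<rho>}"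

definition c_expect :: "nat \<Rightarrow> real \<Rightarrow> real \<Rightarrow> ((nat \<Rightarrow> real) \<Rightarrow> real) \<Rightarrow> real" where
  "c_expect N \<mu> \<rho> F =
     integral {- sqrt \<rho>..sqrt \<rho>}
        (\<lambda>m'. exp (- \<mu> * real N * m') * (\<rho> - m'\<^sup>2) powr ((real N - 3) / 2) * mc_expect N m' \<rho> F)
     / integral {- sqrt \<rho>..sqrt \<rho>}
        (\<lambda>m'. exp (- \<mu> * real N * m') * (\<rho> - m'\<^sup>2) powr ((real N - 3) / 2))"

text \<open>Projection P_I, with I = idx ` UNIV for an injective idx :: 'k => nat.\<close>
definition proj :: "('k::finite \<Rightarrow> nat) \<Rightarrow> (nat \<Rightarrow> real) \<Rightarrow> real ^ 'k" where
  "proj idx \<phi> = (\<chi> i. \<phi> (idx i))"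

end

theory Submission
  imports Defs
begin


lemma gauss_half_int:
  fixes a m hi :: real
  assumes a: "a > 0" and "m \<le> hi"
  shows "((\<lambda>t. exp (- a * (t - m)\<^sup>2) * \<bar>t - m\<bar>) has_integral ((1 - exp (- a * (hi - m)\<^sup>2)) / (2*a))) {m..hi}"
proof -
  have "((\<lambda>t. exp (- a * (t - m)\<^sup>2) * (t - m)) has_integral
     ((\<lambda>t. - exp (- a * (t - m)\<^sup>2) / (2*a)) hi - (\<lambda>t. - exp (- a * (t - m)\<^sup>2) / (2*a)) m)) {m..hi}"
    apply (rule fundamental_theorem_of_calculus[OF assms(2)])
    apply (rule has_real_derivative_iff_has_vector_derivative[THEN iffD1])
    apply (rule derivative_eq_intros refl | simp)+
    using a by (auto simp: field_simps)
  then have "((\<lambda>t. exp (- a * (t - m)\<^sup>2) * (t - m)) has_integral ((1 - exp (- a * (hi - m)\<^sup>2)) / (2*a))) {m..hi}"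
    using a by (simp add: field_simps)
  then show ?thesis
    by (rule has_integral_eq[rotated]) auto
qed

lemma gauss_half_int_left:
  fixes a m lo :: real
  assumes a: "a > 0" and "lo \<le> m"
  shows "((\<lambda>t. exp (- a * (t - m)\<^sup>2) * \<bar>t - m\<bar>) has_integral ((1 - exp (- a * (lo - m)\<^sup>2)) / (2*a))) {lo..m}"
proof -
  have "((\<lambda>t. exp (- a * (t - m)\<^sup>2) * (m - t)) has_integral
     ((\<lambda>t. exp (- a * (t - m)\<^sup>2) / (2*a)) m - (\<lambda>t. exp (- a * (t - m)\<^sup>2) / (2*a)) lo)) {lo..m}"
    apply (rule fundamental_theorem_of_calculus[OF assms(2)])
    apply (rule has_real_derivative_iff_has_vector_derivative[THEN iffD1])
    apply (rule derivative_eq_intros refl | simp)+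
    using a by (auto simp: field_simps)
  then have "((\<lambda>t. exp (- a * (t - m)\<^sup>2) * (m - t)) has_integral ((1 - exp (- a * (lo - m)\<^sup>2)) / (2*a))) {lo..m}"
    using a by (simp add: field_simps)
  then show ?thesis
    by (rule has_integral_eq[rotated]) auto
qed

lemma gauss_abs_int:
  fixes a m lo hi :: real
  assumes a: "a > 0" and "lo \<le> m" "m \<le> hi"
  shows "(\<lambda>t. exp (- a * (t - m)\<^sup>2) * \<bar>t - m\<bar>) integrable_on {lo..hi}"
    "integral {lo..hi} (\<lambda>t. exp (- a * (t - m)\<^sup>2) * \<bar>t - m\<bar>) \<le> 1 / a"
proof -
  have H: "((\<lambda>t. exp (- a * (t - m)\<^sup>2) * \<bar>t - m\<bar>) has_integral
      ((1 - exp (- a * (lo - m)\<^sup>2)) / (2*a) + (1 - exp (- a * (hi - m)\<^sup>2)) / (2*a))) {lo..hi}"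
    by (rule has_integral_combine[OF assms(2,3) gauss_half_int_left[OF a assms(2)] gauss_half_int[OF a assms(3)]])
  then show "(\<lambda>t. exp (- a * (t - m)\<^sup>2) * \<bar>t - m\<bar>) integrable_on {lo..hi}" by blast
  have "(1 - exp (- a * (lo - m)\<^sup>2)) / (2*a) + (1 - exp (- a * (hi - m)\<^sup>2)) / (2*a) \<le> 1 / a"
    using a by (simp add: field_simps add_nonneg_nonneg)
  then show "integral {lo..hi} (\<lambda>t. exp (- a * (t - m)\<^sup>2) * \<bar>t - m\<bar>) \<le> 1 / a"
    using integral_unique[OF H] by simp
qed

lemma key_upper:
  fixes \<rho> m t :: real
  assumes v: "m\<^sup>2 < \<rho>" and t: "t\<^sup>2 < \<rho>"
  shows "(m / (\<rho> - m\<^sup>2)) * t + ln (\<rho> - t\<^sup>2) / 2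
         \<le> (m / (\<rho> - m\<^sup>2)) * m + ln (\<rho> - m\<^sup>2) / 2 - (t - m)\<^sup>2 / (2 * (\<rho> - m\<^sup>2))"
proof -
  define v where "v = \<rho> - m\<^sup>2"
  have vp: "v > 0" using v by (simp add: v_def)
  have q: "(\<rho> - t\<^sup>2) / v > 0" using t vp by simp
  have "ln (\<rho> - t\<^sup>2) - ln v = ln ((\<rho> - t\<^sup>2) / v)"
    using t vp by (simp add: ln_div)
  also have "\<dots> \<le> (\<rho> - t\<^sup>2) / v - 1" using ln_le_minus_one[OF q] .
  finally have L: "ln (\<rho> - t\<^sup>2) - ln v \<le> (\<rho> - t\<^sup>2) / v - 1" .
  have E0: "(\<rho> - t\<^sup>2) / v - 1 = (m\<^sup>2 - t\<^sup>2) / v" using vp by (simp add: v_def field_simps)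
  have E: "(m / v) * (t - m) + ((\<rho> - t\<^sup>2) / v - 1) / 2 = - ((t - m)\<^sup>2 / (2 * v))"
    unfolding E0 using vp by (simp add: field_simps power2_eq_square)
  have D: "(m/v)*(t-m) = (m/v)*t - (m/v)*m" by (simp add: right_diff_distrib)
  show ?thesis using L E D unfolding v_def[symmetric]
    by argo
qed

lemma key_lower:
  fixes \<rho> m t :: real
  assumes v: "m\<^sup>2 < \<rho>" and t: "\<bar>t\<bar> \<le> sqrt \<rho>"
    and d: "\<bar>t - m\<bar> \<le> (\<rho> - m\<^sup>2) / (4 * sqrt \<rho>)"
  shows "t\<^sup>2 < \<rho>"
    "(m / (\<rho> - m\<^sup>2)) * t + ln (\<rho> - t\<^sup>2) / 2
         \<ge> (m / (\<rho> - m\<^sup>2)) * m + ln (\<rho> - m\<^sup>2) / 2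
           - (1 / (2 * (\<rho> - m\<^sup>2)) + 4 * \<rho> / (\<rho> - m\<^sup>2)\<^sup>2) * (t - m)\<^sup>2"
proof -
  define v where "v = \<rho> - m\<^sup>2"
  have vp: "v > 0" using v by (simp add: v_def)
  have rp: "\<rho> > 0" using v zero_le_power2[of m] by linarith
  have sr: "sqrt \<rho> > 0" using rp by simp
  have m: "\<bar>m\<bar> \<le> sqrt \<rho>"
  proof -
    have "sqrt (m\<^sup>2) \<le> sqrt \<rho>" using v by (intro real_sqrt_le_mono) simp
    then show ?thesis by simp
  qed
  define y where "y = (m\<^sup>2 - t\<^sup>2) / v"
  have ay: "\<bar>m\<^sup>2 - t\<^sup>2\<bar> \<le> \<bar>t - m\<bar> * (2 * sqrt \<rho>)"
  proof -
    have "\<bar>m\<^sup>2 - t\<^sup>2\<bar> = \<bar>t - m\<bar> * \<bar>t + m\<bar>" by (simp add: power2_eq_square abs_mult[symmetric] algebra_simps)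
    also have "\<dots> \<le> \<bar>t - m\<bar> * (2 * sqrt \<rho>)" using t m by (intro mult_left_mono) auto
    finally show ?thesis .
  qed
  have "\<bar>t - m\<bar> * (2 * sqrt \<rho>) \<le> v / (4 * sqrt \<rho>) * (2 * sqrt \<rho>)"
    using d sr unfolding v_def by (intro mult_right_mono) auto
  also have "\<dots> = v / 2" using sr by (simp add: field_simps)
  finally have tmv: "\<bar>t - m\<bar> * (2 * sqrt \<rho>) \<le> v / 2" .
  have "\<bar>y\<bar> = \<bar>m\<^sup>2 - t\<^sup>2\<bar> / v" using vp by (simp add: y_def abs_div)
  also have "\<dots> \<le> (v / 2) / v" using ay tmv vp by (intro divide_right_mono) auto
  also have "\<dots> = 1/2" using vp by simp
  finally have y2: "\<bar>y\<bar> \<le> 1/2" .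
  have yb: "y\<^sup>2 \<le> 4 * \<rho> / v\<^sup>2 * (t - m)\<^sup>2"
  proof -
    have "y\<^sup>2 = (m\<^sup>2 - t\<^sup>2)\<^sup>2 / v\<^sup>2" by (simp add: y_def power_divide)
    also have "\<dots> \<le> (\<bar>t - m\<bar> * (2 * sqrt \<rho>))\<^sup>2 / v\<^sup>2"
      using ay by (intro divide_right_mono) (auto simp: abs_le_square_iff[symmetric])
    also have "\<dots> = 4 * \<rho> / v\<^sup>2 * (t - m)\<^sup>2" using rp by (simp add: power_mult_distrib power2_abs field_simps)
    finally show ?thesis .
  qed
  have tv: "\<rho> - t\<^sup>2 = v * (1 + y)" using vp by (simp add: y_def v_def field_simps)
  have "1 + y > 0" using y2 by (simp add: abs_le_iff)
  then have "v * (1 + y) > 0" using vp by simp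
  then show "t\<^sup>2 < \<rho>" using tv by linarith
  have lny: "ln (1 + y) \<ge> y - 2 * y\<^sup>2"
  proof (cases "y \<ge> 0")
    case True
    have "y \<le> 1" using y2 by simp
    then have "y - y\<^sup>2 \<le> ln (1 + y)" using ln_one_plus_pos_lower_bound[of y] True by blast
    moreover have "y\<^sup>2 \<ge> 0" by simp
    ultimately show ?thesis by linarith
  next
    case False
    have "-y \<le> 1/2" using y2 by simp
    then have "- (-y) - 2 * (-y)\<^sup>2 \<le> ln (1 - (-y))" using ln_one_minus_pos_lower_bound[of "-y"] False by simp
    then show ?thesis by simp
  qed
  have "ln (\<rho> - t\<^sup>2) = ln v + ln (1 + y)" using tv vp y2 by (simp add: ln_mult)
  moreover have E: "(m / v) * (t - m) + y / 2 = - ((t - m)\<^sup>2 / (2 * v))"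
    using vp by (simp add: y_def field_simps power2_eq_square)
  ultimately show "(m / (\<rho> - m\<^sup>2)) * t + ln (\<rho> - t\<^sup>2) / 2
         \<ge> (m / (\<rho> - m\<^sup>2)) * m + ln (\<rho> - m\<^sup>2) / 2
           - (1 / (2 * (\<rho> - m\<^sup>2)) + 4 * \<rho> / (\<rho> - m\<^sup>2)\<^sup>2) * (t - m)\<^sup>2"
  proof -
    have D: "(m/v)*(t-m) = (m/v)*t - (m/v)*m" by (simp add: right_diff_distrib)
    have D2: "(1 / (2 * v) + 4 * \<rho> / v\<^sup>2) * (t - m)\<^sup>2 = (t - m)\<^sup>2 / (2 * v) + 4 * \<rho> / v\<^sup>2 * (t - m)\<^sup>2"
      by (simp add: distrib_right)
    have "ln (\<rho> - t\<^sup>2) = ln v + ln (1 + y)" by fact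
    then show ?thesis using lny yb E D D2 unfolding v_def[symmetric] by argo
  qed
qed

lemma neg_prod_le: "- (x::real) * y \<le> \<bar>x\<bar> * \<bar>y\<bar>"
proof -
  have "- x * y \<le> \<bar>- x * y\<bar>" by (rule abs_ge_self)
  also have "\<dots> = \<bar>x\<bar> * \<bar>y\<bar>" by (simp add: abs_mult)
  finally show ?thesis .
qed

lemma neg_prod_ge: "- (x::real) * y \<ge> - (\<bar>x\<bar> * \<bar>y\<bar>)"
proof -
  have "x * y \<le> \<bar>x * y\<bar>" by (rule abs_ge_self)
  also have "\<dots> = \<bar>x\<bar> * \<bar>y\<bar>" by (simp add: abs_mult)
  finally show ?thesis by simp
qed

lemma w_as_exp:
  fixes \<rho> t q :: real and N :: nat
  assumes tl: "t\<^sup>2 < \<rho>" and N: "N \<ge> 3"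
  shows "exp (q * real N * t) * (\<rho> - t\<^sup>2) powr ((real N - 3) / 2)
     = exp (q * 3 * t + (real N - 3) * (q * t + ln (\<rho> - t\<^sup>2) / 2))"
proof -
  define n where "n = real N - 3"
  have P: "(\<rho> - t\<^sup>2) powr ((real N - 3) / 2) = exp (n * (ln (\<rho> - t\<^sup>2) / 2))"
    using tl by (simp add: powr_def n_def mult.commute)
  have Q: "q * real N * t = q * 3 * t + n * (q * t)" by (simp add: n_def algebra_simps)
  have "exp (q * real N * t) * (\<rho> - t\<^sup>2) powr ((real N - 3) / 2)
     = exp (q * 3 * t + n * (q * t)) * exp (n * (ln (\<rho> - t\<^sup>2) / 2))" by (simp only: P Q)
  also have "\<dots> = exp (q * 3 * t + n * (q * t + ln (\<rho> - t\<^sup>2) / 2))"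
    by (simp only: exp_add[symmetric] distrib_left add.assoc)
  finally show ?thesis by (simp only: n_def)
qed

lemma w_upper:
  fixes \<rho> m t :: real and N :: nat
  assumes v: "m\<^sup>2 < \<rho>" and t: "\<bar>t\<bar> \<le> sqrt \<rho>" and N: "N \<ge> 3"
  shows "exp ((m / (\<rho> - m\<^sup>2)) * real N * t) * (\<rho> - t\<^sup>2) powr ((real N - 3) / 2)
     \<le> exp (3 * \<bar>m / (\<rho> - m\<^sup>2)\<bar> * sqrt \<rho>) * exp ((real N - 3) * ((m / (\<rho> - m\<^sup>2)) * m + ln (\<rho> - m\<^sup>2) / 2))
       * exp (- ((real N - 3) / (2 * (\<rho> - m\<^sup>2))) * (t - m)\<^sup>2)"
proof -
  define n where "n = real N - 3"
  define q where "q = m / (\<rho> - m\<^sup>2)"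
  have n0: "n \<ge> 0" using N by (simp add: n_def)
  have t2: "t\<^sup>2 \<le> \<rho>"
  proof -
    have "t\<^sup>2 \<le> (sqrt \<rho>)\<^sup>2" using t by (simp add: abs_le_square_iff[symmetric])
    also have "\<dots> = \<rho>" using v zero_le_power2[of m] by (intro real_sqrt_pow2) linarith
    finally show ?thesis .
  qed
  show ?thesis
  proof (cases "t\<^sup>2 = \<rho>")
    case True
    then show ?thesis by simp
  next
    case False
    then have tl: "t\<^sup>2 < \<rho>" using t2 by simp
    have a: "q * 3 * t \<le> 3 * \<bar>q\<bar> * sqrt \<rho>"
    proof -
      have "q * 3 * t \<le> 3 * (\<bar>q\<bar> * \<bar>t\<bar>)" using neg_prod_le[of "-q" t] by simp
      also have "\<dots> \<le> 3 * (\<bar>q\<bar> * sqrt \<rho>)" using t by (intro mult_left_mono) auto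
      finally show ?thesis by simp
    qed
    have b: "n * (q * t + ln (\<rho> - t\<^sup>2) / 2) \<le>
         n * (q * m + ln (\<rho> - m\<^sup>2) / 2 - (t - m)\<^sup>2 / (2 * (\<rho> - m\<^sup>2)))"
      using key_upper[OF v tl] n0 unfolding q_def by (intro mult_left_mono) auto
    have c: "n * (q * m + ln (\<rho> - m\<^sup>2) / 2 - (t - m)\<^sup>2 / (2 * (\<rho> - m\<^sup>2)))
        = n * (q * m + ln (\<rho> - m\<^sup>2) / 2) + (- (n / (2 * (\<rho> - m\<^sup>2))) * (t - m)\<^sup>2)"
      by (simp add: algebra_simps)
    have "q * 3 * t + n * (q * t + ln (\<rho> - t\<^sup>2) / 2) \<le>
       3 * \<bar>q\<bar> * sqrt \<rho> + n * (q * m + ln (\<rho> - m\<^sup>2) / 2) + (- (n / (2 * (\<rho> - m\<^sup>2))) * (t - m)\<^sup>2)"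
      using a b c by linarith
    then have "exp (q * 3 * t + n * (q * t + ln (\<rho> - t\<^sup>2) / 2)) \<le>
       exp (3 * \<bar>q\<bar> * sqrt \<rho>) * exp (n * (q * m + ln (\<rho> - m\<^sup>2) / 2)) * exp (- (n / (2 * (\<rho> - m\<^sup>2))) * (t - m)\<^sup>2)"
      by (simp add: exp_add[symmetric])
    then show ?thesis using w_as_exp[OF tl N, of q] unfolding q_def[symmetric] n_def[symmetric] by simp
  qed
qed

lemma w_lower:
  fixes \<rho> m t :: real and N :: nat
  assumes v: "m\<^sup>2 < \<rho>" and t: "\<bar>t\<bar> \<le> sqrt \<rho>" and N: "N \<ge> 3"
    and d: "\<bar>t - m\<bar> \<le> (\<rho> - m\<^sup>2) / (4 * sqrt \<rho>)"
  shows "exp ((m / (\<rho> - m\<^sup>2)) * real N * t) * (\<rho> - t\<^sup>2) powr ((real N - 3) / 2)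
     \<ge> exp (- 3 * \<bar>m / (\<rho> - m\<^sup>2)\<bar> * sqrt \<rho>) * exp ((real N - 3) * ((m / (\<rho> - m\<^sup>2)) * m + ln (\<rho> - m\<^sup>2) / 2))
       * exp (- ((real N - 3) * (1 / (2 * (\<rho> - m\<^sup>2)) + 4 * \<rho> / (\<rho> - m\<^sup>2)\<^sup>2)) * (t - m)\<^sup>2)"
proof -
  define n where "n = real N - 3"
  define q where "q = m / (\<rho> - m\<^sup>2)"
  define b where "b = 1 / (2 * (\<rho> - m\<^sup>2)) + 4 * \<rho> / (\<rho> - m\<^sup>2)\<^sup>2"
  have n0: "n \<ge> 0" using N by (simp add: n_def)
  note K = key_lower[OF v t d]
  have tl: "t\<^sup>2 < \<rho>" by (rule K(1))
  have a: "q * 3 * t \<ge> - 3 * \<bar>q\<bar> * sqrt \<rho>"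
  proof -
    have "q * 3 * t \<ge> - 3 * (\<bar>q\<bar> * \<bar>t\<bar>)" using neg_prod_ge[of "-q" t] by simp
    moreover have "3 * (\<bar>q\<bar> * \<bar>t\<bar>) \<le> 3 * (\<bar>q\<bar> * sqrt \<rho>)" using t by (intro mult_left_mono) auto
    ultimately show ?thesis by simp
  qed
  have bb: "n * (q * t + ln (\<rho> - t\<^sup>2) / 2) \<ge>
       n * (q * m + ln (\<rho> - m\<^sup>2) / 2 - b * (t - m)\<^sup>2)"
    using K(2) n0 unfolding b_def q_def by (intro mult_left_mono) auto
  have c: "n * (q * m + ln (\<rho> - m\<^sup>2) / 2 - b * (t - m)\<^sup>2)
      = n * (q * m + ln (\<rho> - m\<^sup>2) / 2) + (- (n * b) * (t - m)\<^sup>2)"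
    by (simp add: algebra_simps)
  have "q * 3 * t + n * (q * t + ln (\<rho> - t\<^sup>2) / 2) \<ge>
     - 3 * \<bar>q\<bar> * sqrt \<rho> + n * (q * m + ln (\<rho> - m\<^sup>2) / 2) + (- (n * b) * (t - m)\<^sup>2)"
    using a bb c by linarith
  then have "exp (q * 3 * t + n * (q * t + ln (\<rho> - t\<^sup>2) / 2)) \<ge>
     exp (- 3 * \<bar>q\<bar> * sqrt \<rho>) * exp (n * (q * m + ln (\<rho> - m\<^sup>2) / 2)) * exp (- (n * b) * (t - m)\<^sup>2)"
    by (simp add: exp_add[symmetric])
  then show ?thesis using w_as_exp[OF tl N, of q] unfolding q_def[symmetric] n_def[symmetric] b_def[symmetric] by simp
qed

lemma w_cont:
  fixes \<rho> q :: real and N :: nat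
  assumes "N \<ge> 4"
  shows "continuous_on {- sqrt \<rho>..sqrt \<rho>} (\<lambda>t. exp (q * real N * t) * (\<rho> - t\<^sup>2) powr ((real N - 3) / 2))"
proof (cases "\<rho> \<ge> 0")
  case True
  have "\<forall>t\<in>{- sqrt \<rho>..sqrt \<rho>}. \<rho> - t\<^sup>2 \<ge> 0"
  proof
    fix t assume "t \<in> {- sqrt \<rho>..sqrt \<rho>}"
    then have "\<bar>t\<bar> \<le> sqrt \<rho>" by auto
    then have "t\<^sup>2 \<le> (sqrt \<rho>)\<^sup>2" by (simp add: abs_le_square_iff[symmetric])
    then show "\<rho> - t\<^sup>2 \<ge> 0" using True by simp
  qed
  moreover have "(real N - 3) / 2 > 0" using assms by simp
  ultimately show ?thesis
    by (intro continuous_intros continuous_on_powr') auto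
next
  case False
  then have "{- sqrt \<rho>..sqrt \<rho>} = {}"
    by auto
  then show ?thesis by simp
qed

lemma laplace:
  fixes \<rho> m :: real
  assumes v: "m\<^sup>2 < \<rho>"
  defines "w \<equiv> \<lambda>(N::nat) t. exp ((m / (\<rho> - m\<^sup>2)) * real N * t) * (\<rho> - t\<^sup>2) powr ((real N - 3) / 2)"
  shows "\<exists>C. \<forall>\<^sub>F N in sequentially. 0 < integral {- sqrt \<rho>..sqrt \<rho>} (w N) \<and>
      integral {- sqrt \<rho>..sqrt \<rho>} (\<lambda>t. w N t * \<bar>t - m\<bar>) \<le> C / sqrt (real N) * integral {- sqrt \<rho>..sqrt \<rho>} (w N)"
proof -
  define vv where "vv = \<rho> - m\<^sup>2"
  define q where "q = m / (\<rho> - m\<^sup>2)"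
  have vp: "vv > 0" using v by (simp add: vv_def)
  have rp: "\<rho> > 0" using v zero_le_power2[of m] by linarith
  have sr: "sqrt \<rho> > 0" using rp by simp
  have ml: "\<bar>m\<bar> < sqrt \<rho>"
  proof -
    have "sqrt (m\<^sup>2) < sqrt \<rho>" using v by (intro real_sqrt_less_mono) simp
    then show ?thesis by simp
  qed
  define E where "E = exp (3 * \<bar>q\<bar> * sqrt \<rho>)"
  define e where "e = exp (- 3 * \<bar>q\<bar> * sqrt \<rho>)"
  define b where "b = 1 / (2 * (\<rho> - m\<^sup>2)) + 4 * \<rho> / (\<rho> - m\<^sup>2)\<^sup>2"
  have bp: "b \<ge> 0"
  proof -
    have "1 / (2 * (\<rho> - m\<^sup>2)) > 0" using vp by (simp add: vv_def)
    moreover have "4 * \<rho> / (\<rho> - m\<^sup>2)\<^sup>2 \<ge> 0" using rp by simp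
    ultimately show ?thesis by (simp add: b_def)
  qed
  define \<delta> where "\<delta> = (\<rho> - m\<^sup>2) / (4 * sqrt \<rho>)"
  define \<gamma> where "\<gamma> = min \<delta> (sqrt \<rho> - \<bar>m\<bar>)"
  have \<gamma>p: "\<gamma> > 0" using vp sr ml by (simp add: \<gamma>_def \<delta>_def vv_def)
  define c where "c = e * exp (- b)"
  have cp: "c > 0" by (simp add: c_def e_def)
  have Ep: "E > 0" by (simp add: E_def)
  define C where "C = sqrt 2 * vv * E / c"
  define N0 where "N0 = max 6 (nat \<lceil>1 / \<gamma>\<^sup>2 + 3\<rceil>)"
  let ?I = "{- sqrt \<rho>..sqrt \<rho>}"
  have "\<forall>N\<ge>N0. 0 < integral ?I (w N) \<and>
      integral ?I (\<lambda>t. w N t * \<bar>t - m\<bar>) \<le> C / sqrt (real N) * integral ?I (w N)"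
  proof (intro allI impI)
    fix N assume N: "N \<ge> N0"
    then have N6: "N \<ge> 6" by (simp add: N0_def)
    have "real N \<ge> 1 / \<gamma>\<^sup>2 + 3" using N unfolding N0_def by linarith
    define n where "n = real N - 3"
    have n3: "n \<ge> 3" using N6 by (simp add: n_def)
    have ng: "n \<ge> 1 / \<gamma>\<^sup>2" using \<open>real N \<ge> 1 / \<gamma>\<^sup>2 + 3\<close> by (simp add: n_def)
    define \<eta> where "\<eta> = 1 / sqrt n"
    have \<eta>p: "\<eta> > 0" using n3 by (simp add: \<eta>_def)
    have \<eta>\<gamma>: "\<eta> \<le> \<gamma>"
    proof -
      have "1 / \<gamma> \<le> sqrt n"
      proof -
        have "sqrt (1 / \<gamma>\<^sup>2) \<le> sqrt n" using ng by (rule real_sqrt_le_mono)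
        then show ?thesis using \<gamma>p by (simp add: real_sqrt_divide)
      qed
      then show ?thesis using \<gamma>p n3 unfolding \<eta>_def by (simp add: field_simps)
    qed
    have n\<eta>: "n * \<eta>\<^sup>2 = 1" using n3 by (simp add: \<eta>_def power_divide)
    define \<Phi> where "\<Phi> = exp (n * (q * m + ln (\<rho> - m\<^sup>2) / 2))"
    have \<Phi>p: "\<Phi> > 0" by (simp add: \<Phi>_def)
    have cont: "continuous_on ?I (w N)" unfolding w_def using N6 by (intro w_cont) simp
    have intI: "w N integrable_on ?I" by (rule integrable_continuous_interval[OF cont])
    have wnn: "\<forall>t\<in>?I. 0 \<le> w N t" by (simp add: w_def)
    have sub: "{m - \<eta>..m + \<eta>} \<subseteq> ?I" using \<eta>\<gamma> ml by (auto simp: \<gamma>_def)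
    have intS: "w N integrable_on {m - \<eta>..m + \<eta>}" by (rule integrable_on_subinterval[OF intI sub])
    have lowpt: "c * \<Phi> \<le> w N t" if t: "t \<in> {m - \<eta>..m + \<eta>}" for t
    proof -
      have tI: "\<bar>t\<bar> \<le> sqrt \<rho>" using sub t by auto
      have td: "\<bar>t - m\<bar> \<le> \<eta>" using t by auto
      then have "\<bar>t - m\<bar> \<le> (\<rho> - m\<^sup>2) / (4 * sqrt \<rho>)" using \<eta>\<gamma> by (simp add: \<gamma>_def \<delta>_def)
      note L = w_lower[OF v tI _ this] 
      have "(t - m)\<^sup>2 \<le> \<eta>\<^sup>2" using td \<eta>p by (simp add: abs_le_square_iff[symmetric])
      then have "n * b * (t - m)\<^sup>2 \<le> n * b * \<eta>\<^sup>2"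
        using n3 bp by (intro mult_left_mono) auto
      also have "\<dots> = b" using n\<eta> by (simp add: algebra_simps)
      finally have "exp (- b) \<le> exp (- (n * b) * (t - m)\<^sup>2)" by simp
      then have "c * \<Phi> \<le> e * \<Phi> * exp (- (n * b) * (t - m)\<^sup>2)"
        unfolding c_def using \<Phi>p by (simp add: e_def)
      also have "\<dots> \<le> w N t" using L N6 unfolding w_def e_def \<Phi>_def n_def b_def q_def by simp
      finally show ?thesis .
    qed
    have "integral {m - \<eta>..m + \<eta>} (\<lambda>t. c * \<Phi>) \<le> integral {m - \<eta>..m + \<eta>} (w N)"
      using lowpt intS by (intro integral_le) auto
    also have "\<dots> \<le> integral ?I (w N)" by (rule integral_subset_le[OF sub intS intI wnn])
    finally have low0: "integral {m - \<eta>..m + \<eta>} (\<lambda>t. c * \<Phi>) \<le> integral ?I (w N)" .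
    have eq2: "integral {m - \<eta>..m + \<eta>} (\<lambda>t. c * \<Phi>) = 2 * \<eta> * (c * \<Phi>)" using \<eta>p by simp
    have low: "2 * \<eta> * (c * \<Phi>) \<le> integral ?I (w N)" using low0 unfolding eq2 .
    have pos: "0 < integral ?I (w N)" using low \<eta>p cp \<Phi>p by (smt (verit) mult_pos_pos)
    define a where "a = n / (2 * vv)"
    have ap: "a > 0" using n3 vp by (simp add: a_def)
    have G: "(\<lambda>t. exp (- a * (t - m)\<^sup>2) * \<bar>t - m\<bar>) integrable_on ?I"
       "integral ?I (\<lambda>t. exp (- a * (t - m)\<^sup>2) * \<bar>t - m\<bar>) \<le> 1 / a"
      using gauss_abs_int[OF ap, of "- sqrt \<rho>" m "sqrt \<rho>"] ml by auto
    have uppt: "w N t * \<bar>t - m\<bar> \<le> (E * \<Phi>) * (exp (- a * (t - m)\<^sup>2) * \<bar>t - m\<bar>)" if t: "t \<in> ?I" for t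
    proof -
      have tI: "\<bar>t\<bar> \<le> sqrt \<rho>" using t by auto
      have "w N t \<le> E * \<Phi> * exp (- a * (t - m)\<^sup>2)"
        using w_upper[OF v tI, of N] N6 unfolding w_def E_def \<Phi>_def n_def a_def q_def vv_def by simp
      then have "w N t * \<bar>t - m\<bar> \<le> E * \<Phi> * exp (- a * (t - m)\<^sup>2) * \<bar>t - m\<bar>"
        by (rule mult_right_mono) simp
      then show ?thesis by (simp only: mult.assoc)
    qed
    have int2: "(\<lambda>t. w N t * \<bar>t - m\<bar>) integrable_on ?I"
      by (rule integrable_continuous_interval) (intro continuous_intros cont)
    have "integral ?I (\<lambda>t. w N t * \<bar>t - m\<bar>) \<le> integral ?I (\<lambda>t. (E * \<Phi>) * (exp (- a * (t - m)\<^sup>2) * \<bar>t - m\<bar>))"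
      using uppt int2 integrable_on_cmult_left[OF G(1), of "E * \<Phi>"] by (intro integral_le) auto
    also have "\<dots> = (E * \<Phi>) * integral ?I (\<lambda>t. exp (- a * (t - m)\<^sup>2) * \<bar>t - m\<bar>)" by simp
    also have "\<dots> \<le> (E * \<Phi>) * (1 / a)" using G(2) Ep \<Phi>p by (intro mult_left_mono) auto
    also have "\<dots> = 2 * vv * E * \<Phi> * (1 / n)" using vp n3 by (simp add: a_def field_simps)
    also have "\<dots> \<le> 2 * vv * E * \<Phi> * (sqrt 2 / (sqrt (real N) * sqrt n))"
    proof -
      have "sqrt (real N) * sqrt n \<le> sqrt 2 * n"
      proof -
        have "(real N - 3) * (real N - 6) \<ge> 0" using N6 by (intro mult_nonneg_nonneg) auto
        then have "real N * n \<le> 2 * n\<^sup>2" by (simp add: n_def power2_eq_square algebra_simps)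
        then have "sqrt (real N * n) \<le> sqrt (2 * n\<^sup>2)" by (rule real_sqrt_le_mono)
        then show ?thesis using n3 by (simp add: real_sqrt_mult)
      qed
      then have "1 / n \<le> sqrt 2 / (sqrt (real N) * sqrt n)" using n3 N6
        by (simp add: field_simps)
      then show ?thesis using vp Ep \<Phi>p by (intro mult_left_mono) auto
    qed
    also have "\<dots> = C / sqrt (real N) * (2 * \<eta> * (c * \<Phi>))"
      using cp by (simp add: C_def \<eta>_def field_simps)
    also have "\<dots> \<le> C / sqrt (real N) * integral ?I (w N)"
      using low cp vp Ep by (intro mult_left_mono) (auto simp: C_def)
    finally show "0 < integral ?I (w N) \<and>
      integral ?I (\<lambda>t. w N t * \<bar>t - m\<bar>) \<le> C / sqrt (real N) * integral ?I (w N)" using pos by simp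
  qed
  then show ?thesis by (intro exI[of _ C]) (simp add: eventually_sequentially; blast)
qed



definition PN :: "nat \<Rightarrow> (nat \<Rightarrow> real) measure" where
  "PN N = PiM {..<N} (\<lambda>_. std_gauss)"
definition gb :: "nat \<Rightarrow> (nat \<Rightarrow> real) \<Rightarrow> real" where
  "gb N g = (\<Sum>y<N. g y) / real N"
definition rr :: "nat \<Rightarrow> (nat \<Rightarrow> real) \<Rightarrow> real" where
  "rr N g = sqrt (\<Sum>y<N. (g y - gb N g)\<^sup>2)"
definition uu :: "nat \<Rightarrow> (nat \<Rightarrow> real) \<Rightarrow> nat \<Rightarrow> real" where
  "uu N g x = (g x - gb N g) / rr N g"

lemma prob_std_gauss: "prob_space std_gauss"
  unfolding std_gauss_def by (rule prob_space_normal_density) simp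

lemma sets_std_gauss [simp]: "sets std_gauss = sets borel"
  by (simp add: std_gauss_def)

lemma space_std_gauss [simp]: "space std_gauss = UNIV"
  by (simp add: std_gauss_def)

lemma prob_PN: "prob_space (PN N)"
  unfolding PN_def by (intro prob_space_PiM prob_std_gauss)

lemma mc_config_eq:
  "x < N \<Longrightarrow> mc_config N a \<rho> g x = a + sqrt (real N) * sqrt (\<rho> - a\<^sup>2) * uu N g x"
  unfolding mc_config_def uu_def rr_def gb_def Let_def by (simp add: real_sqrt_mult)

lemma sum_uu_sq: "(\<Sum>x<N. (uu N g x)\<^sup>2) \<le> 1"
proof (cases "rr N g = 0")
  case True
  then show ?thesis by (simp add: uu_def)
next
  case False
  have S: "(\<Sum>y<N. (g y - gb N g)\<^sup>2) \<ge> 0" by (intro sum_nonneg) auto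
  have "(\<Sum>x<N. (uu N g x)\<^sup>2) = (\<Sum>x<N. (g x - gb N g)\<^sup>2) / (rr N g)\<^sup>2"
    by (simp add: uu_def power_divide sum_divide_distrib)
  also have "\<dots> = 1" using False S by (simp add: rr_def)
  finally show ?thesis by simp
qed

lemma uu_sq_le1: "x < N \<Longrightarrow> (uu N g x)\<^sup>2 \<le> 1"
  using member_le_sum[of x "{..<N}" "\<lambda>x. (uu N g x)\<^sup>2"] sum_uu_sq[of N g] by auto

lemma uu_abs_le1: "x < N \<Longrightarrow> \<bar>uu N g x\<bar> \<le> 1"
  using uu_sq_le1[of x N g] by (simp add: abs_square_le_1)

lemma comp_meas: "y < N \<Longrightarrow> (\<lambda>g. g y) \<in> borel_measurable (PN N)"
  unfolding PN_def
  using measurable_component_singleton[of y "{..<N}" "\<lambda>_. std_gauss"]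
  by (simp add: measurable_cong_sets[OF refl sets_std_gauss])

lemma gb_meas: "gb N \<in> borel_measurable (PN N)"
  unfolding gb_def by (intro borel_measurable_divide borel_measurable_sum comp_meas) auto

lemma rr_meas: "rr N \<in> borel_measurable (PN N)"
proof -
  have "(\<lambda>g. \<Sum>y<N. (g y - gb N g)\<^sup>2) \<in> borel_measurable (PN N)"
    by (intro borel_measurable_sum borel_measurable_power borel_measurable_diff comp_meas gb_meas) auto
  moreover have "sqrt \<in> borel_measurable borel"
    by (intro borel_measurable_continuous_onI continuous_intros)
  ultimately show ?thesis unfolding rr_def by (rule measurable_compose)
qed

lemma uu_meas: "x < N \<Longrightarrow> (\<lambda>g. uu N g x) \<in> borel_measurable (PN N)"
  unfolding uu_def by (intro borel_measurable_divide borel_measurable_diff comp_meas gb_meas rr_meas)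

definition sw :: "nat \<Rightarrow> nat \<Rightarrow> nat \<Rightarrow> nat" where
  "sw x y z = (if z = x then y else if z = y then x else z)"

lemma sw_sw [simp]: "sw x y (sw x y z) = z" by (simp add: sw_def)

lemma sw_in: "x < N \<Longrightarrow> y < N \<Longrightarrow> z < N \<Longrightarrow> sw x y z < N" by (simp add: sw_def)

lemma sw_inj: "inj_on (sw x y) A"
  by (metis inj_on_inverseI sw_sw)

lemma sum_sw:
  assumes "x < N" "y < N"
  shows "(\<Sum>z<N. F (sw x y z)) = (\<Sum>z<N. F z)"
proof -
  have im: "sw x y ` {..<N} = {..<N}"
  proof
    show "sw x y ` {..<N} \<subseteq> {..<N}" using assms sw_in by auto
    show "{..<N} \<subseteq> sw x y ` {..<N}"
    proof
      fix z assume "z \<in> {..<N}"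
      then show "z \<in> sw x y ` {..<N}" using assms sw_in[of x N y z]
        by (intro image_eqI[of z _ "sw x y z"]) auto
    qed
  qed
  have "(\<Sum>z\<in>sw x y ` {..<N}. F z) = (\<Sum>z<N. F (sw x y z))"
    by (rule sum.reindex[OF sw_inj, unfolded comp_def])
  then show ?thesis using im by simp
qed

lemma uu_sw:
  assumes "x < N" "y < N" "z < N"
  shows "uu N (\<lambda>i\<in>{..<N}. g (sw x y i)) z = uu N g (sw x y z)"
proof -
  have gb: "gb N (\<lambda>i\<in>{..<N}. g (sw x y i)) = gb N g"
    unfolding gb_def using sum_sw[OF assms(1,2), of g] by simp
  have rr: "rr N (\<lambda>i\<in>{..<N}. g (sw x y i)) = rr N g"
    unfolding rr_def gb using sum_sw[OF assms(1,2), of "\<lambda>z. (g z - gb N g)\<^sup>2"] by simp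
  show ?thesis unfolding uu_def gb rr using assms by simp
qed

lemma uu_sym:
  assumes "x < N" "y < N"
  shows "integral\<^sup>L (PN N) (\<lambda>g. (uu N g x)\<^sup>2) = integral\<^sup>L (PN N) (\<lambda>g. (uu N g y)\<^sup>2)"
proof -
  let ?T = "\<lambda>\<omega>. \<lambda>i\<in>{..<N}. \<omega> (sw x y i)"
  have D: "distr (PN N) (PN N) ?T = PN N"
    unfolding PN_def
    using distr_PiM_reindex[of "{..<N}" "\<lambda>_. std_gauss" "sw x y" "{..<N}"] prob_std_gauss sw_inj
      sw_in[OF assms] by auto
  have Tm: "?T \<in> measurable (PN N) (PN N)"
    unfolding PN_def
    by (intro measurable_restrict measurable_component_singleton) (use sw_in[OF assms] in auto)
  have um: "(\<lambda>g. (uu N g x)\<^sup>2) \<in> borel_measurable (PN N)"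
    by (intro borel_measurable_power uu_meas assms)
  have "integral\<^sup>L (PN N) (\<lambda>g. (uu N g x)\<^sup>2) = integral\<^sup>L (distr (PN N) (PN N) ?T) (\<lambda>g. (uu N g x)\<^sup>2)"
    using D by simp
  also have "\<dots> = integral\<^sup>L (PN N) (\<lambda>g. (uu N (?T g) x)\<^sup>2)"
    by (rule integral_distr[OF Tm um])
  also have "\<dots> = integral\<^sup>L (PN N) (\<lambda>g. (uu N g y)\<^sup>2)"
    using uu_sw[OF assms assms(1)] by (simp add: sw_def)
  finally show ?thesis .
qed

lemma fin_PN: "finite_measure (PN N)"
proof -
  interpret prob_space "PN N" by (rule prob_PN)
  show ?thesis by (rule finite_measure_axioms)
qed

lemma int_bounded:
  fixes f :: "(nat \<Rightarrow> real) \<Rightarrow> real"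
  assumes "f \<in> borel_measurable (PN N)" "\<And>g. \<bar>f g\<bar> \<le> B"
  shows "integrable (PN N) f"
  apply (rule finite_measure.integrable_const_bound[OF fin_PN, where B=B])
  using assms by auto

lemma int_uu_sq: "x < N \<Longrightarrow> integrable (PN N) (\<lambda>g. (uu N g x)\<^sup>2)"
  apply (rule int_bounded[where B=1])
   apply (intro borel_measurable_power uu_meas, assumption)
  using uu_sq_le1 by simp

lemma int_uu_abs: "x < N \<Longrightarrow> integrable (PN N) (\<lambda>g. \<bar>uu N g x\<bar>)"
  apply (rule int_bounded[where B=1])
   apply (intro borel_measurable_abs uu_meas, assumption)
  using uu_abs_le1 by simp

lemma int_sq_uu:
  assumes "x < N"
  shows "integral\<^sup>L (PN N) (\<lambda>g. (uu N g x)\<^sup>2) \<le> 1 / real N"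
proof -
  interpret prob_space "PN N" by (rule prob_PN)
  have "(\<Sum>y<N. integral\<^sup>L (PN N) (\<lambda>g. (uu N g y)\<^sup>2)) = (\<Sum>y<N. integral\<^sup>L (PN N) (\<lambda>g. (uu N g x)\<^sup>2))"
    by (rule sum.cong) (auto simp: uu_sym[OF assms])
  then have "real N * integral\<^sup>L (PN N) (\<lambda>g. (uu N g x)\<^sup>2) = (\<Sum>y<N. integral\<^sup>L (PN N) (\<lambda>g. (uu N g y)\<^sup>2))"
    by simp
  also have "\<dots> = integral\<^sup>L (PN N) (\<lambda>g. \<Sum>y<N. (uu N g y)\<^sup>2)"
    using Bochner_Integration.integral_sum[where I="{..<N}" and M="PN N" and f="\<lambda>y g. (uu N g y)\<^sup>2"] int_uu_sq by simp
  also have "\<dots> \<le> integral\<^sup>L (PN N) (\<lambda>g. 1)"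
  proof (rule integral_mono)
    show "integrable (PN N) (\<lambda>g. \<Sum>y<N. (uu N g y)\<^sup>2)"
      by (rule Bochner_Integration.integrable_sum) (rule int_uu_sq, simp)
  qed (auto intro: sum_uu_sq)
  also have "\<dots> = 1" using prob_space.prob_space[OF prob_PN] by simp
  finally show ?thesis using assms by (simp add: field_simps)
qed

lemma int_abs_uu:
  assumes "x < N"
  shows "integral\<^sup>L (PN N) (\<lambda>g. \<bar>uu N g x\<bar>) \<le> 1 / sqrt (real N)"
proof -
  interpret prob_space "PN N" by (rule prob_PN)
  define s where "s = sqrt (real N)"
  have sp: "s > 0" using assms by (simp add: s_def)
  have pt: "\<bar>u\<bar> \<le> (s * u\<^sup>2 + 1 / s) / 2" for u :: real
  proof -
    have "0 \<le> (s * \<bar>u\<bar> - 1)\<^sup>2 / s" using sp by simp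
    also have "(s * \<bar>u\<bar> - 1)\<^sup>2 / s = s * u\<^sup>2 - 2 * \<bar>u\<bar> + 1 / s"
      using sp by (simp add: power2_eq_square field_simps)
    finally show ?thesis by simp
  qed
  have "integral\<^sup>L (PN N) (\<lambda>g. \<bar>uu N g x\<bar>) \<le> integral\<^sup>L (PN N) (\<lambda>g. (s * (uu N g x)\<^sup>2 + 1 / s) / 2)"
  proof (intro integral_mono int_uu_abs pt assms)
    show "integrable (PN N) (\<lambda>g. (s * (uu N g x)\<^sup>2 + 1 / s) / 2)"
      using int_uu_sq[OF assms] by simp
  qed
  also have "\<dots> = (s * integral\<^sup>L (PN N) (\<lambda>g. (uu N g x)\<^sup>2) + 1 / s) / 2"
    using int_uu_sq[OF assms] prob_space.prob_space[OF prob_PN] by simp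
  also have "\<dots> \<le> (s * (1 / real N) + 1 / s) / 2"
    using int_sq_uu[OF assms] sp by (intro divide_right_mono add_right_mono mult_left_mono) auto
  also have "s * (1 / real N) = 1 / s" using sp by (simp add: s_def field_simps)
  finally show ?thesis by (simp add: s_def)
qed



lemma proj_comp: "proj idx \<phi> $ k = \<phi> (idx k)"
  by (simp add: proj_def)

lemma X_meas:
  fixes idx :: "'k::finite \<Rightarrow> nat" and f :: "real ^ 'k \<Rightarrow> real"
  assumes "\<forall>i. idx i < N" "continuous_on UNIV f"
  shows "(\<lambda>g. f (proj idx (mc_config N a \<rho> g))) \<in> borel_measurable (PN N)"
proof -
  have "(\<lambda>g. proj idx (mc_config N a \<rho> g)) \<in> borel_measurable (PN N)"
  proof (rule borel_measurable_euclidean_space[THEN iffD2], rule ballI)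
    fix i :: "real ^ 'k" assume "i \<in> Basis"
    then have "i \<in> (\<Union>k. \<Union>u\<in>(Basis::real set). {axis k u})" by (simp only: Basis_vec_def)
    then obtain k u where "u \<in> (Basis::real set)" "i = axis k u" by blast
    then have k: "i = axis k 1" by simp
    have "(\<lambda>g. proj idx (mc_config N a \<rho> g) \<bullet> i) = (\<lambda>g. a + sqrt (real N) * sqrt (\<rho> - a\<^sup>2) * uu N g (idx k))"
      using assms(1) by (simp add: k inner_axis proj_comp mc_config_eq)
    also have "\<dots> \<in> borel_measurable (PN N)"
      using assms(1) by (intro borel_measurable_add borel_measurable_times uu_meas) auto
    finally show "(\<lambda>g. proj idx (mc_config N a \<rho> g) \<bullet> i) \<in> borel_measurable (PN N)" .
  qed
  then show ?thesis by (rule measurable_compose[OF _ borel_measurable_continuous_onI[OF assms(2)]])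
qed

lemma PN_int_bound:
  fixes F :: "(nat \<Rightarrow> real) \<Rightarrow> real"
  assumes "\<And>x. \<bar>F x\<bar> \<le> B"
  shows "\<bar>integral\<^sup>L (PN N) F\<bar> \<le> B"
proof (cases "integrable (PN N) F")
  case True
  have "\<bar>integral\<^sup>L (PN N) F\<bar> \<le> integral\<^sup>L (PN N) (\<lambda>x. \<bar>F x\<bar>)" by (rule integral_abs_bound)
  also have "\<dots> \<le> integral\<^sup>L (PN N) (\<lambda>x. B)"
    using True assms finite_measure.integrable_const[OF fin_PN] by (intro integral_mono) auto
  also have "\<dots> = B" using prob_space.prob_space[OF prob_PN] by simp
  finally show ?thesis .
next
  case False
  then show ?thesis using assms[of undefined] by (simp add: not_integrable_integral_eq)
qed

lemma mc_expect_bound: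
  fixes F :: "(nat \<Rightarrow> real) \<Rightarrow> real"
  assumes "\<And>x. \<bar>F x\<bar> \<le> B"
  shows "\<bar>mc_expect N a \<rho> F\<bar> \<le> B"
proof -
  have "\<bar>integral\<^sup>L (PN N) (\<lambda>g. F (mc_config N a \<rho> g))\<bar> \<le> B"
    using assms by (intro PN_int_bound) auto
  then show ?thesis by (simp add: mc_expect_def PN_def)
qed

lemma A_lip:
  fixes idx :: "'k::finite \<Rightarrow> nat" and f :: "real ^ 'k \<Rightarrow> real"
  assumes N: "N > 0" and idx: "\<forall>i. idx i < N" and L: "1-lipschitz_on UNIV f"
    and B: "\<And>x. \<bar>f x\<bar> \<le> B"
  shows "\<bar>mc_expect N a \<rho> (f \<circ> proj idx) - mc_expect N b \<rho> (f \<circ> proj idx)\<bar>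
     \<le> real CARD('k) * (\<bar>a - b\<bar> + \<bar>sqrt (\<rho> - a\<^sup>2) - sqrt (\<rho> - b\<^sup>2)\<bar>)"
proof -
  have cont: "continuous_on UNIV f" by (rule lipschitz_on_continuous_on[OF L])
  define X where "X c g = f (proj idx (mc_config N c \<rho> g))" for c g
  have Xm: "X c \<in> borel_measurable (PN N)" for c
    unfolding X_def[abs_def] by (rule X_meas[OF idx cont])
  have Xi: "integrable (PN N) (X c)" for c
    by (rule int_bounded[OF Xm, where B=B]) (simp add: X_def B)
  define d where "d = sqrt (real N) * \<bar>sqrt (\<rho> - a\<^sup>2) - sqrt (\<rho> - b\<^sup>2)\<bar>"
  have d0: "d \<ge> 0" by (simp add: d_def)
  have pt: "\<bar>X a g - X b g\<bar> \<le> (\<Sum>k\<in>UNIV. \<bar>a - b\<bar> + d * \<bar>uu N g (idx k)\<bar>)" for g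
  proof -
    have "\<bar>X a g - X b g\<bar> = dist (f (proj idx (mc_config N a \<rho> g))) (f (proj idx (mc_config N b \<rho> g)))"
      by (simp add: X_def dist_real_def)
    also have "\<dots> \<le> 1 * dist (proj idx (mc_config N a \<rho> g)) (proj idx (mc_config N b \<rho> g))"
      by (rule lipschitz_onD[OF L]) auto
    also have "\<dots> = norm (proj idx (mc_config N a \<rho> g) - proj idx (mc_config N b \<rho> g))"
      by (simp add: dist_norm)
    also have "\<dots> \<le> (\<Sum>k\<in>UNIV. \<bar>(proj idx (mc_config N a \<rho> g) - proj idx (mc_config N b \<rho> g)) $ k\<bar>)"
      by (rule norm_le_l1_cart)
    also have "\<dots> \<le> (\<Sum>k\<in>UNIV. \<bar>a - b\<bar> + d * \<bar>uu N g (idx k)\<bar>)"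
    proof (rule sum_mono)
      fix k :: 'k
      have "(proj idx (mc_config N a \<rho> g) - proj idx (mc_config N b \<rho> g)) $ k
          = (a - b) + sqrt (real N) * (sqrt (\<rho> - a\<^sup>2) - sqrt (\<rho> - b\<^sup>2)) * uu N g (idx k)"
        using idx by (simp add: proj_comp mc_config_eq algebra_simps)
      also have "\<bar>\<dots>\<bar> \<le> \<bar>a - b\<bar> + \<bar>sqrt (real N) * (sqrt (\<rho> - a\<^sup>2) - sqrt (\<rho> - b\<^sup>2)) * uu N g (idx k)\<bar>"
        by (rule abs_triangle_ineq)
      also have "\<bar>sqrt (real N) * (sqrt (\<rho> - a\<^sup>2) - sqrt (\<rho> - b\<^sup>2)) * uu N g (idx k)\<bar> = d * \<bar>uu N g (idx k)\<bar>"
        by (simp add: d_def abs_mult)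
      finally show "\<bar>(proj idx (mc_config N a \<rho> g) - proj idx (mc_config N b \<rho> g)) $ k\<bar> \<le> \<bar>a - b\<bar> + d * \<bar>uu N g (idx k)\<bar>" .
    qed
    finally show ?thesis .
  qed
  have ia: "integrable (PN N) (\<lambda>g. \<bar>a - b\<bar> + d * \<bar>uu N g (idx k)\<bar>)" for k
    using int_uu_abs[of "idx k" N] idx finite_measure.integrable_const[OF fin_PN]
    by (intro Bochner_Integration.integrable_add integrable_mult_right) auto
  have "\<bar>mc_expect N a \<rho> (f \<circ> proj idx) - mc_expect N b \<rho> (f \<circ> proj idx)\<bar>
      = \<bar>integral\<^sup>L (PN N) (\<lambda>g. X a g - X b g)\<bar>"
    using Xi by (simp add: mc_expect_def PN_def[symmetric] X_def[abs_def] comp_def)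
  also have "\<dots> \<le> integral\<^sup>L (PN N) (\<lambda>g. \<bar>X a g - X b g\<bar>)" by (rule integral_abs_bound)
  also have "\<dots> \<le> integral\<^sup>L (PN N) (\<lambda>g. \<Sum>k\<in>UNIV. \<bar>a - b\<bar> + d * \<bar>uu N g (idx k)\<bar>)"
  proof (rule integral_mono)
    show "integrable (PN N) (\<lambda>g. \<Sum>k\<in>UNIV. \<bar>a - b\<bar> + d * \<bar>uu N g (idx k)\<bar>)"
      by (rule Bochner_Integration.integrable_sum) (rule ia)
    show "integrable (PN N) (\<lambda>g. \<bar>X a g - X b g\<bar>)"
      using Xi by simp
  qed (rule pt)
  also have "\<dots> = (\<Sum>k\<in>UNIV. integral\<^sup>L (PN N) (\<lambda>g. \<bar>a - b\<bar> + d * \<bar>uu N g (idx k)\<bar>))"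
    by (rule Bochner_Integration.integral_sum) (rule ia)
  also have "\<dots> \<le> (\<Sum>k\<in>(UNIV::'k set). \<bar>a - b\<bar> + \<bar>sqrt (\<rho> - a\<^sup>2) - sqrt (\<rho> - b\<^sup>2)\<bar>)"
  proof (rule sum_mono)
    fix k :: 'k
    have "integral\<^sup>L (PN N) (\<lambda>g. \<bar>a - b\<bar> + d * \<bar>uu N g (idx k)\<bar>)
        = \<bar>a - b\<bar> + d * integral\<^sup>L (PN N) (\<lambda>g. \<bar>uu N g (idx k)\<bar>)"
    proof -
      have "integral\<^sup>L (PN N) (\<lambda>g. \<bar>a - b\<bar> + d * \<bar>uu N g (idx k)\<bar>)
         = integral\<^sup>L (PN N) (\<lambda>g. \<bar>a - b\<bar>) + integral\<^sup>L (PN N) (\<lambda>g. d * \<bar>uu N g (idx k)\<bar>)"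
        using int_uu_abs[of "idx k" N] idx finite_measure.integrable_const[OF fin_PN]
        by (intro Bochner_Integration.integral_add integrable_mult_right) auto
      then show ?thesis using prob_space.prob_space[OF prob_PN] by simp
    qed
    also have "\<dots> \<le> \<bar>a - b\<bar> + d * (1 / sqrt (real N))"
      using int_abs_uu[of "idx k" N] idx d0 by (intro add_left_mono mult_left_mono) auto
    also have "d * (1 / sqrt (real N)) = \<bar>sqrt (\<rho> - a\<^sup>2) - sqrt (\<rho> - b\<^sup>2)\<bar>"
      using N by (simp add: d_def)
    finally show "integral\<^sup>L (PN N) (\<lambda>g. \<bar>a - b\<bar> + d * \<bar>uu N g (idx k)\<bar>)
      \<le> \<bar>a - b\<bar> + \<bar>sqrt (\<rho> - a\<^sup>2) - sqrt (\<rho> - b\<^sup>2)\<bar>" .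
  qed
  also have "\<dots> = real CARD('k) * (\<bar>a - b\<bar> + \<bar>sqrt (\<rho> - a\<^sup>2) - sqrt (\<rho> - b\<^sup>2)\<bar>)"
    by simp
  finally show ?thesis .
qed



lemma sqrt_diff_le:
  fixes a b :: real
  assumes "a \<ge> 0" "b > 0"
  shows "\<bar>sqrt a - sqrt b\<bar> \<le> \<bar>a - b\<bar> / sqrt b"
proof -
  have sb: "sqrt b > 0" using assms by simp
  have "\<bar>a - b\<bar> = \<bar>sqrt a - sqrt b\<bar> * (sqrt a + sqrt b)"
  proof -
    have "a - b = (sqrt a - sqrt b) * (sqrt a + sqrt b)"
      using assms by (simp add: algebra_simps)
    then show ?thesis using assms by (simp add: abs_mult)
  qed
  also have "\<dots> \<ge> \<bar>sqrt a - sqrt b\<bar> * sqrt b" using assms by (intro mult_left_mono) auto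
  finally show ?thesis using sb by (simp add: field_simps)
qed

lemma A_cont:
  fixes idx :: "'k::finite \<Rightarrow> nat" and f :: "real ^ 'k \<Rightarrow> real"
  assumes N: "N > 0" and idx: "\<forall>i. idx i < N" and L: "1-lipschitz_on UNIV f"
    and B: "\<And>x. \<bar>f x\<bar> \<le> B"
  shows "continuous_on S (\<lambda>t. mc_expect N t \<rho> (f \<circ> proj idx))"
  unfolding continuous_on_def
proof
  fix x assume "x \<in> S"
  let ?A = "\<lambda>t. mc_expect N t \<rho> (f \<circ> proj idx)"
  let ?g = "\<lambda>t. real CARD('k) * (\<bar>t - x\<bar> + \<bar>sqrt (\<rho> - t\<^sup>2) - sqrt (\<rho> - x\<^sup>2)\<bar>)"
  have "((\<lambda>t. ?A t - ?A x) \<longlongrightarrow> 0) (at x within S)"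
  proof (rule Lim_null_comparison)
    show "\<forall>\<^sub>F t in at x within S. norm (?A t - ?A x) \<le> ?g t"
      using A_lip[OF N idx L B] by (intro always_eventually) simp
    have "(?g \<longlongrightarrow> ?g x) (at x within S)"
      by (intro tendsto_intros)
    then show "(?g \<longlongrightarrow> 0) (at x within S)" by simp
  qed
  then show "(?A \<longlongrightarrow> ?A x) (at x within S)" by (simp add: LIM_zero_iff)
qed

lemma c_est:
  fixes idx :: "'k::finite \<Rightarrow> nat" and f :: "real ^ 'k \<Rightarrow> real" and \<rho> m :: real
  assumes v: "m\<^sup>2 < \<rho>" and L: "1-lipschitz_on UNIV f" and B: "\<And>x. \<bar>f x\<bar> \<le> B"
  shows "\<exists>C. \<forall>\<^sub>F N in sequentially.
    \<bar>c_expect N (- m / (\<rho> - m\<^sup>2)) \<rho> (f \<circ> proj idx) - mc_expect N m \<rho> (f \<circ> proj idx)\<bar> \<le> C / sqrt (real N)"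
proof -
  define w where "w \<equiv> \<lambda>(N::nat) t. exp ((m / (\<rho> - m\<^sup>2)) * real N * t) * (\<rho> - t\<^sup>2) powr ((real N - 3) / 2)"
  obtain C0 where C0: "\<forall>\<^sub>F N in sequentially. 0 < integral {- sqrt \<rho>..sqrt \<rho>} (w N) \<and>
      integral {- sqrt \<rho>..sqrt \<rho>} (\<lambda>t. w N t * \<bar>t - m\<bar>) \<le> C0 / sqrt (real N) * integral {- sqrt \<rho>..sqrt \<rho>} (w N)"
    using laplace[OF v] unfolding w_def by blast
  define vv where "vv = \<rho> - m\<^sup>2"
  have vp: "vv > 0" using v by (simp add: vv_def)
  have rp: "\<rho> > 0" using v zero_le_power2[of m] by linarith
  have ml: "\<bar>m\<bar> \<le> sqrt \<rho>"
  proof -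
    have "sqrt (m\<^sup>2) \<le> sqrt \<rho>" using v by (intro real_sqrt_le_mono) simp
    then show ?thesis by simp
  qed
  define K where "K = real CARD('k)"
  define Lc where "Lc = K * (1 + 2 * sqrt \<rho> / sqrt vv)"
  have Lc0: "Lc \<ge> 0"
  proof -
    have "2 * sqrt \<rho> / sqrt vv \<ge> 0" using vp rp by simp
    then show ?thesis unfolding Lc_def K_def by (intro mult_nonneg_nonneg) auto
  qed
  define M where "M = Max (range idx)"
  have idxM: "idx i \<le> M" for i unfolding M_def by (rule Max_ge) auto
  let ?I = "{- sqrt \<rho>..sqrt \<rho>}"
  have ev: "\<forall>\<^sub>F N in sequentially. N \<ge> 4 \<and> N \<ge> M + 1"
    unfolding eventually_sequentially by (intro exI[of _ "max 4 (M + 1)"]) auto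
  define F where "F = f \<circ> proj idx"
  have "\<forall>\<^sub>F N in sequentially.
    \<bar>c_expect N (- m / (\<rho> - m\<^sup>2)) \<rho> F - mc_expect N m \<rho> F\<bar> \<le> (Lc * C0) / sqrt (real N)"
    using C0 ev
  proof eventually_elim
    case (elim N)
    note E = this
    have Wp: "0 < integral ?I (w N)" using E(1) by (rule conjunct1)
    have Wb: "integral ?I (\<lambda>t. w N t * \<bar>t - m\<bar>) \<le> C0 / sqrt (real N) * integral ?I (w N)"
      using E(1) by (rule conjunct2)
    have N4: "N \<ge> 4" using E(2) by (rule conjunct1)
    have NM: "N \<ge> M + 1" using E(2) by (rule conjunct2)
    have Np: "N > 0" using N4 by simp
    have idx: "\<forall>i. idx i < N" 
    proof
      fix i have "idx i \<le> M" by (rule idxM)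
      then show "idx i < N" using NM by linarith
    qed
    let ?A = "\<lambda>t. mc_expect N t \<rho> F"
    have contw: "continuous_on ?I (w N)" unfolding w_def using N4 by (intro w_cont) simp
    have contA: "continuous_on ?I ?A" unfolding F_def by (rule A_cont[OF Np idx L B])
    have iw: "w N integrable_on ?I" by (rule integrable_continuous_interval[OF contw])
    have iwA: "(\<lambda>t. w N t * ?A t) integrable_on ?I"
      by (rule integrable_continuous_interval) (intro continuous_intros contw contA)
    have iwm: "(\<lambda>t. w N t * \<bar>t - m\<bar>) integrable_on ?I"
      by (rule integrable_continuous_interval) (intro continuous_intros contw)
    have ce: "c_expect N (- m / (\<rho> - m\<^sup>2)) \<rho> F = integral ?I (\<lambda>t. w N t * ?A t) / integral ?I (w N)"
      unfolding c_expect_def w_def minus_divide_left minus_minus by (rule refl)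
    have Alip: "\<bar>?A t - ?A m\<bar> \<le> Lc * \<bar>t - m\<bar>" if t: "t \<in> ?I" for t
    proof -
      have tI: "\<bar>t\<bar> \<le> sqrt \<rho>" using t by auto
      have t2: "\<rho> - t\<^sup>2 \<ge> 0"
      proof -
        have "t\<^sup>2 \<le> (sqrt \<rho>)\<^sup>2" using tI by (simp add: abs_le_square_iff[symmetric])
        then show ?thesis using rp by simp
      qed
      have "\<bar>sqrt (\<rho> - t\<^sup>2) - sqrt (\<rho> - m\<^sup>2)\<bar> \<le> \<bar>(\<rho> - t\<^sup>2) - (\<rho> - m\<^sup>2)\<bar> / sqrt vv"
        using sqrt_diff_le[OF t2, of "\<rho> - m\<^sup>2"] vp by (simp add: vv_def)
      also have "\<bar>(\<rho> - t\<^sup>2) - (\<rho> - m\<^sup>2)\<bar> = \<bar>t - m\<bar> * \<bar>t + m\<bar>"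
        by (simp add: power2_eq_square abs_mult[symmetric] algebra_simps)
      also have "\<dots> \<le> \<bar>t - m\<bar> * (2 * sqrt \<rho>)" using tI ml by (intro mult_left_mono) auto
      finally have sd: "\<bar>sqrt (\<rho> - t\<^sup>2) - sqrt (\<rho> - m\<^sup>2)\<bar> \<le> \<bar>t - m\<bar> * (2 * sqrt \<rho>) / sqrt vv"
        using vp by (simp add: divide_right_mono)
      have "\<bar>?A t - ?A m\<bar> \<le> K * (\<bar>t - m\<bar> + \<bar>sqrt (\<rho> - t\<^sup>2) - sqrt (\<rho> - m\<^sup>2)\<bar>)"
        unfolding K_def F_def by (rule A_lip[OF Np idx L B])
      also have "\<dots> \<le> K * (\<bar>t - m\<bar> + \<bar>t - m\<bar> * (2 * sqrt \<rho>) / sqrt vv)"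
        using sd by (intro mult_left_mono add_left_mono) (auto simp: K_def)
      also have "\<dots> = Lc * \<bar>t - m\<bar>" by (simp add: Lc_def algebra_simps)
      finally show ?thesis .
    qed
    have diff: "c_expect N (- m / (\<rho> - m\<^sup>2)) \<rho> F - ?A m
        = integral ?I (\<lambda>t. w N t * (?A t - ?A m)) / integral ?I (w N)"
    proof -
      have "integral ?I (\<lambda>t. w N t * (?A t - ?A m)) = integral ?I (\<lambda>t. w N t * ?A t - w N t * ?A m)"
        by (simp only: right_diff_distrib)
      also have "\<dots> = integral ?I (\<lambda>t. w N t * ?A t) - integral ?I (\<lambda>t. w N t * ?A m)"
        using integral_diff[OF iwA integrable_on_cmult_right[OF iw, of "?A m"]] by simp
      also have "integral ?I (\<lambda>t. w N t * ?A m) = integral ?I (w N) * ?A m"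
        by simp
      finally have D: "integral ?I (\<lambda>t. w N t * (?A t - ?A m)) = integral ?I (\<lambda>t. w N t * ?A t) - integral ?I (w N) * ?A m" .
      show ?thesis unfolding ce D using Wp by (simp add: diff_divide_distrib)
    qed
    have "\<bar>integral ?I (\<lambda>t. w N t * (?A t - ?A m))\<bar> \<le> integral ?I (\<lambda>t. Lc * (w N t * \<bar>t - m\<bar>))"
    proof -
      have "norm (integral ?I (\<lambda>t. w N t * (?A t - ?A m))) \<le> integral ?I (\<lambda>t. Lc * (w N t * \<bar>t - m\<bar>))"
      proof (rule integral_norm_bound_integral)
        show "(\<lambda>t. w N t * (?A t - ?A m)) integrable_on ?I"
          by (rule integrable_continuous_interval) (intro continuous_intros contw contA)
        show "(\<lambda>t. Lc * (w N t * \<bar>t - m\<bar>)) integrable_on ?I"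
          using integrable_on_cmult_left[OF iwm, of Lc] by simp
        fix t assume t: "t \<in> ?I"
        have w0: "w N t \<ge> 0" by (simp add: w_def)
        have "norm (w N t * (?A t - ?A m)) = w N t * \<bar>?A t - ?A m\<bar>" using w0 by (simp add: abs_mult)
        also have "\<dots> \<le> w N t * (Lc * \<bar>t - m\<bar>)" using Alip[OF t] w0 by (rule mult_left_mono)
        finally show "norm (w N t * (?A t - ?A m)) \<le> Lc * (w N t * \<bar>t - m\<bar>)" by (simp add: algebra_simps)
      qed
      then show ?thesis by simp
    qed
    also have "\<dots> = Lc * integral ?I (\<lambda>t. w N t * \<bar>t - m\<bar>)" by simp
    also have "\<dots> \<le> Lc * (C0 / sqrt (real N) * integral ?I (w N))" using Wb Lc0 by (rule mult_left_mono)
    finally have num: "\<bar>integral ?I (\<lambda>t. w N t * (?A t - ?A m))\<bar> \<le> (Lc * C0) / sqrt (real N) * integral ?I (w N)"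
      by simp
    show ?case unfolding diff using num Wp by (simp add: abs_div divide_le_eq)
  qed
  then show ?thesis unfolding F_def by blast
qed



lemma decay:
  fixes \<theta> :: real
  assumes "0 < \<theta>" "\<theta> < 1"
  shows "\<exists>C. \<forall>N\<ge>1. \<theta> powr ((real N - 3) / 2) \<le> C / sqrt (real N)"
proof -
  define q where "q = sqrt \<theta>"
  have q0: "q > 0" and q1: "q < 1" using assms by (auto simp: q_def)
  define x where "x = 1 / q - 1"
  have x0: "x > 0" using q0 q1 by (simp add: x_def field_simps)
  have "\<forall>N\<ge>1. \<theta> powr ((real N - 3) / 2) \<le> (1 / (q^3 * x)) / sqrt (real N)"
  proof (intro allI impI)
    fix N :: nat assume N: "N \<ge> 1"
    have th: "\<theta> = q powr 2" using assms q0 by (simp add: q_def powr_half_sqrt[symmetric] powr_powr)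
    have "\<theta> powr ((real N - 3) / 2) = q powr (real N - 3)"
    proof -
      have e2: "2 * ((real N - 3) / 2) = real N - 3" by simp
      show ?thesis unfolding th powr_powr e2 by (rule refl)
    qed
    also have "\<dots> = q ^ N / q ^ 3"
      using q0 by (simp add: powr_diff powr_realpow)
    finally have e: "\<theta> powr ((real N - 3) / 2) = q ^ N / q ^ 3" .
    have "1 + real N * x \<le> (1 + x) ^ N" using x0 by (intro Bernoulli_inequality) simp
    then have "real N * x \<le> (1 / q) ^ N" by (simp add: x_def)
    then have "q ^ N * (real N * x) \<le> 1" using q0 by (simp add: field_simps power_divide)
    then have qn: "q ^ N \<le> 1 / (real N * x)" using x0 N by (simp add: field_simps)
    have sN: "sqrt (real N) \<le> real N"
    proof -
      have s1: "sqrt (real N) \<ge> 1" using N by simp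
      have "sqrt (real N) * 1 \<le> sqrt (real N) * sqrt (real N)"
        using s1 by (intro mult_left_mono) auto
      then show ?thesis by simp
    qed
    have "1 / (real N * x) \<le> 1 / (sqrt (real N) * x)"
      using sN x0 N by (intro divide_left_mono mult_right_mono mult_pos_pos) auto
    then have "q ^ N \<le> 1 / (sqrt (real N) * x)" using qn by linarith
    then have "q ^ N / q ^ 3 \<le> (1 / (sqrt (real N) * x)) / q ^ 3" using q0 by (intro divide_right_mono) auto
    also have "\<dots> = (1 / (q^3 * x)) / sqrt (real N)" by (simp add: field_simps)
    finally show "\<theta> powr ((real N - 3) / 2) \<le> (1 / (q^3 * x)) / sqrt (real N)" using e by simp
  qed
  then show ?thesis by blast
qed

lemma mix_bound:
  fixes Zm Zo Am Ao B :: real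
  assumes "Zm > 0" "Zo \<ge> 0" "\<bar>Am\<bar> \<le> B" "\<bar>Ao\<bar> \<le> B"
  shows "\<bar>(Zm * Am + Zo * Ao) / (Zm + Zo) - Am\<bar> \<le> 2 * B * (Zo / Zm)"
proof -
  have p: "Zm + Zo > 0" using assms by simp
  have "(Zm * Am + Zo * Ao) / (Zm + Zo) - Am = Zo * (Ao - Am) / (Zm + Zo)"
    using p by (simp add: field_simps)
  then have "\<bar>(Zm * Am + Zo * Ao) / (Zm + Zo) - Am\<bar> = Zo * \<bar>Ao - Am\<bar> / (Zm + Zo)"
    using p assms by (simp add: abs_mult abs_div)
  also have "\<dots> \<le> Zo * (2 * B) / (Zm + Zo)"
    using assms p by (intro divide_right_mono mult_left_mono) auto
  also have "\<dots> \<le> Zo * (2 * B) / Zm"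
  proof -
    have "0 \<le> Zo * (2 * B)" using assms by (intro mult_nonneg_nonneg) auto
    then show ?thesis using assms by (intro divide_left_mono) auto
  qed
  finally show ?thesis by (simp add: field_simps)
qed

lemma fe_est:
  fixes J h \<rho> \<epsilon> B :: real and F :: "(nat \<Rightarrow> real) \<Rightarrow> real"
  assumes J: "J > 0" and h: "h \<noteq> 0" and rp: "\<rho> > 0" and E: "\<epsilon> \<in> energy_set J h \<rho>"
    and B: "\<And>x. \<bar>F x\<bar> \<le> B"
  defines "m \<equiv> - h / J + sgn h * sqrt (h\<^sup>2 / J\<^sup>2 - 2 * \<epsilon> / J)"
  shows "m\<^sup>2 < \<rho>"
    and "\<exists>C. \<forall>\<^sub>F N in sequentially. \<bar>fe_expect J h N \<epsilon> \<rho> F - mc_expect N m \<rho> F\<bar> \<le> C / sqrt (real N)"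
proof -
  define s where "s = sqrt (h\<^sup>2 / J\<^sup>2 - 2 * \<epsilon> / J)"
  define P where "P = - h / J + s"
  define Mn where "Mn = - h / J - s"
  have ele: "\<epsilon> \<le> h\<^sup>2 / (2 * J)" and Eb: "\<bar>\<bar>h\<bar> / J - s\<bar> < sqrt \<rho>"
    using E by (auto simp: energy_set_def s_def)
  have absm: "\<bar>m\<bar> = \<bar>\<bar>h\<bar> / J - s\<bar>"
  proof (cases "h > 0")
    case True
    then show ?thesis by (simp add: m_def s_def[symmetric] abs_minus_commute)
  next
    case False
    then have "h < 0" using h by simp
    then show ?thesis by (simp add: m_def s_def[symmetric])
  qed
  have mlt: "\<bar>m\<bar> < sqrt \<rho>" using absm Eb by simp
  show msq: "m\<^sup>2 < \<rho>"
  proof -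
    have "sqrt (m\<^sup>2) < sqrt \<rho>" using mlt by simp
    then show ?thesis by (simp only: real_sqrt_less_iff)
  qed
  have B0: "B \<ge> 0" using B[of undefined] by linarith
  have fe_eq: "fe_expect J h N \<epsilon> \<rho> F =
    (if \<epsilon> < h\<^sup>2 / (2 * J) \<and> P\<^sup>2 < \<rho> \<and> Mn\<^sup>2 < \<rho> then
       (Z_MC N P \<rho> * mc_expect N P \<rho> F + Z_MC N Mn \<rho> * mc_expect N Mn \<rho> F)
         / (Z_MC N P \<rho> + Z_MC N Mn \<rho>)
     else if \<epsilon> < h\<^sup>2 / (2 * J) \<and> min (P\<^sup>2) (Mn\<^sup>2) < \<rho> \<and> \<rho> \<le> max (P\<^sup>2) (Mn\<^sup>2) then
       mc_expect N (if \<bar>P\<bar> < \<bar>Mn\<bar> then P else Mn) \<rho> F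
     else if \<epsilon> = h\<^sup>2 / (2 * J) \<and> \<rho> > h\<^sup>2 / J\<^sup>2 then
       mc_expect N (- h / J) \<rho> F
     else undefined)" for N
    unfolding fe_expect_def Let_def m_plus_def m_minus_def s_def[symmetric] P_def[symmetric] Mn_def[symmetric]
    by (rule refl)
  show "\<exists>C. \<forall>\<^sub>F N in sequentially. \<bar>fe_expect J h N \<epsilon> \<rho> F - mc_expect N m \<rho> F\<bar> \<le> C / sqrt (real N)"
  proof (cases "\<epsilon> = h\<^sup>2 / (2 * J)")
    case True
    have "h\<^sup>2 / J\<^sup>2 - 2 * \<epsilon> / J = 0" using True J by (simp add: power2_eq_square field_simps)
    then have sz: "s = 0" by (simp add: s_def)
    then have mh: "m = - h / J" by (simp add: m_def s_def[symmetric])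
    have "\<bar>h\<bar> / J < sqrt \<rho>" using Eb sz J by simp
    then have "sqrt ((h / J)\<^sup>2) < sqrt \<rho>" using J by (simp add: abs_div)
    then have "(h / J)\<^sup>2 < \<rho>" by (simp only: real_sqrt_less_iff)
    then have c3: "\<rho> > h\<^sup>2 / J\<^sup>2" by (simp add: power_divide)
    have "fe_expect J h N \<epsilon> \<rho> F = mc_expect N m \<rho> F" for N
      unfolding fe_eq using True c3 mh by simp
    then show ?thesis by (intro exI[of _ 0]) simp
  next
    case False
    then have elt: "\<epsilon> < h\<^sup>2 / (2 * J)" using ele by simp
    have "2 * \<epsilon> / J < h\<^sup>2 / J\<^sup>2"
    proof -
      have "2 * \<epsilon> < h\<^sup>2 / J" using elt J by (simp add: field_simps)
      then have "2 * \<epsilon> / J < h\<^sup>2 / J / J" using J by (intro divide_strict_right_mono)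
      also have "h\<^sup>2 / J / J = h\<^sup>2 / J\<^sup>2" by (simp add: power2_eq_square)
      finally show ?thesis .
    qed
    then have sp: "s > 0" by (simp add: s_def)
    define o' where "o' = (if h > 0 then Mn else P)"
    have mo: "(P = m \<and> Mn = o') \<or> (P = o' \<and> Mn = m)"
      using h by (auto simp: o'_def m_def P_def Mn_def s_def)
    have mlo: "\<bar>m\<bar> < \<bar>o'\<bar>"
    proof (cases "h > 0")
      case True
      have hj: "h / J > 0" using True J by simp
      have "\<bar>- h / J + s\<bar> < \<bar>- h / J - s\<bar>" using hj sp by (simp add: abs_if)
      then show ?thesis using True by (simp add: m_def o'_def Mn_def s_def[symmetric])
    next
      case False
      then have "h < 0" using h by simp
      then have hj: "- h / J > 0" using J by (simp add: divide_neg_pos)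
      have "\<bar>- h / J - s\<bar> < \<bar>- h / J + s\<bar>" using hj sp by (simp add: abs_if)
      then show ?thesis using False \<open>h < 0\<close> by (simp add: m_def o'_def P_def s_def[symmetric])
    qed
    have sel: "(if \<bar>P\<bar> < \<bar>Mn\<bar> then P else Mn) = m"
      using mo mlo by auto
    show ?thesis
    proof (cases "o'\<^sup>2 < \<rho>")
      case False
      have "min (P\<^sup>2) (Mn\<^sup>2) < \<rho>" using mo msq by auto
      moreover have "\<rho> \<le> max (P\<^sup>2) (Mn\<^sup>2)" using mo False by auto
      ultimately have c2: "\<epsilon> < h\<^sup>2 / (2 * J) \<and> min (P\<^sup>2) (Mn\<^sup>2) < \<rho> \<and> \<rho> \<le> max (P\<^sup>2) (Mn\<^sup>2)"
        using elt by blast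
      have nb: "\<not> (\<epsilon> < h\<^sup>2 / (2 * J) \<and> P\<^sup>2 < \<rho> \<and> Mn\<^sup>2 < \<rho>)" using mo False by auto
      have "fe_expect J h N \<epsilon> \<rho> F = mc_expect N m \<rho> F" for N
        unfolding fe_eq if_not_P[OF nb] if_P[OF c2] sel by (rule refl)
      then show ?thesis by (intro exI[of _ 0]) simp
    next
      case True
      define \<theta> where "\<theta> = (\<rho> - o'\<^sup>2) / (\<rho> - m\<^sup>2)"
      have vm: "\<rho> - m\<^sup>2 > 0" using msq by simp
      have m2o2: "m\<^sup>2 < o'\<^sup>2" using power_strict_mono[OF mlo abs_ge_zero, of 2] by simp
      have th0: "0 < \<theta>" using True vm by (simp add: \<theta>_def)
      have th1: "\<theta> < 1" using m2o2 vm by (simp add: \<theta>_def)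
      obtain C' where C': "\<forall>N\<ge>1. \<theta> powr ((real N - 3) / 2) \<le> C' / sqrt (real N)"
        using decay[OF th0 th1] by blast
      have bnd: "\<bar>fe_expect J h N \<epsilon> \<rho> F - mc_expect N m \<rho> F\<bar> \<le> (2 * B * C') / sqrt (real N)"
        if N: "N \<ge> 1" for N
      proof -
        let ?Zm = "Z_MC N m \<rho>" and ?Zo = "Z_MC N o' \<rho>"
        have fe1: "fe_expect J h N \<epsilon> \<rho> F = (?Zm * mc_expect N m \<rho> F + ?Zo * mc_expect N o' \<rho> F) / (?Zm + ?Zo)"
          unfolding fe_eq using elt True msq mo by (auto simp: add.commute)
        have Zm: "?Zm > 0" using vm by (simp add: Z_MC_def)
        have Zo: "?Zo \<ge> 0" by (simp add: Z_MC_def)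
        have "\<bar>fe_expect J h N \<epsilon> \<rho> F - mc_expect N m \<rho> F\<bar> \<le> 2 * B * (?Zo / ?Zm)"
          unfolding fe1 by (rule mix_bound[OF Zm Zo mc_expect_bound mc_expect_bound]) (rule B)+
        also have "?Zo / ?Zm = \<theta> powr ((real N - 3) / 2)"
          using True vm by (simp add: Z_MC_def \<theta>_def powr_divide)
        also have "2 * B * \<dots> \<le> 2 * B * (C' / sqrt (real N))"
          using C' N B0 by (intro mult_left_mono) auto
        finally show ?thesis by simp
      qed
      show ?thesis
        by (intro exI[of _ "2 * B * C'"] eventually_sequentiallyI[of 1]) (rule bnd)
    qed
  qed
qed


theorem theorem4p26:
  fixes J h \<rho> \<epsilon> :: real
    and idx :: "'k::finite \<Rightarrow> nat"
    and f :: "real ^ 'k \<Rightarrow> real"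
  assumes "J > 0" and "h \<noteq> 0" and "\<rho> > 0"
    and "\<epsilon> \<in> energy_set J h \<rho>"
    and "inj idx"
    and "bounded (range f)" and "1-lipschitz_on UNIV f"
  defines "m \<equiv> - h / J + sgn h * sqrt (h\<^sup>2 / J\<^sup>2 - 2 * \<epsilon> / J)"
  defines "\<mu> \<equiv> - m / (\<rho> - m\<^sup>2)"
  shows "(\<lambda>N. fe_expect J h N \<epsilon> \<rho> (f \<circ> proj idx) - c_expect N \<mu> \<rho> (f \<circ> proj idx))
           \<in> O(\<lambda>N. 1 / sqrt (real N))"
proof -
  obtain B where B0: "\<forall>x\<in>range f. norm x \<le> B" using assms(6) by (auto simp: bounded_iff)
  have B: "\<bar>f x\<bar> \<le> B" for x using B0 by auto
  have BF: "\<bar>(f \<circ> proj idx) x\<bar> \<le> B" for x using B by simp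
  have msq: "m\<^sup>2 < \<rho>"
    using fe_est(1)[OF assms(1,2,3,4), of "f \<circ> proj idx" B, folded m_def] BF by blast
  obtain C1 where C1: "\<forall>\<^sub>F N in sequentially. \<bar>fe_expect J h N \<epsilon> \<rho> (f \<circ> proj idx) - mc_expect N m \<rho> (f \<circ> proj idx)\<bar> \<le> C1 / sqrt (real N)"
    using fe_est(2)[OF assms(1,2,3,4), of "f \<circ> proj idx" B, folded m_def] BF by blast
  obtain C2 where C2: "\<forall>\<^sub>F N in sequentially.
    \<bar>c_expect N \<mu> \<rho> (f \<circ> proj idx) - mc_expect N m \<rho> (f \<circ> proj idx)\<bar> \<le> C2 / sqrt (real N)"
    using c_est[OF msq assms(7) B, of idx, folded \<mu>_def] by blast
  have "\<forall>\<^sub>F N in sequentially. norm (fe_expect J h N \<epsilon> \<rho> (f \<circ> proj idx) - c_expect N \<mu> \<rho> (f \<circ> proj idx))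
      \<le> (C1 + C2) * norm (1 / sqrt (real N))"
    using C1 C2
  proof eventually_elim
    case (elim N)
    have "norm (fe_expect J h N \<epsilon> \<rho> (f \<circ> proj idx) - c_expect N \<mu> \<rho> (f \<circ> proj idx))
       \<le> C1 / sqrt (real N) + C2 / sqrt (real N)"
      using elim by simp
    also have "\<dots> = (C1 + C2) * norm (1 / sqrt (real N))" by (simp add: add_divide_distrib)
    finally show ?case .
  qed
  then show ?thesis by (rule bigoI)
qed

end
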